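(* If $X\in\mathbf{M}_{2n}(\mathbb{C})$ satisfies $X^{\sharp}=X$, then there is a unitary $U\in\mathbf{M}_{2n}(\mathbb{C})$ with $U^{\sharp}=U$ and $X=U|X|$, where $|X|=(X^*X)^{1/2}$.
   Context: For $X\in\mathbf{M}_{2n}(\mathbb{C})$ in $n\times n$ blocks $X=\begin{bmatrix}A&B\\C&D\end{bmatrix}$, the dual operation is $X^{\sharp}=\begin{bmatrix}D^{\mathrm T}&-B^{\mathrm T}\\-C^{\mathrm T}&A^{\mathrm T}\end{bmatrix}$. $(X^*X)^{1/2}$ is the positive semidefinite square root. *)

theory Defs
  imports "Jordan_Normal_Form.Schur_Decomposition"
begin

definition sharp :: "nat \<Rightarrow> complex mat \<Rightarrow> complex mat" where
  "sharp n X = (case split_block X n n of (A, B, C, D) \<Rightarrow>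
     four_block_mat (transpose_mat D) (- transpose_mat B)
                    (- transpose_mat C) (transpose_mat A))"

definition unitary_mat :: "nat \<Rightarrow> complex mat \<Rightarrow> bool" where
  "unitary_mat N U \<longleftrightarrow> U \<in> carrier_mat N N \<and> mat_adjoint U * U = 1\<^sub>m N"

definition psd_mat :: "nat \<Rightarrow> complex mat \<Rightarrow> bool" where
  "psd_mat N P \<longleftrightarrow> P \<in> carrier_mat N N \<and> mat_adjoint P = P \<and>
     (\<forall>v \<in> carrier_vec N. 0 \<le> Re (scalar_prod (P *\<^sub>v v) (conjugate v)))"

definition mat_abs :: "nat \<Rightarrow> complex mat \<Rightarrow> complex mat" where
  "mat_abs N X = (THE P. psd_mat N P \<and> P * P = mat_adjoint X * X)"

end

theory Submission
  imports Defs
begin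


abbreviation adj :: "complex mat \<Rightarrow> complex mat" where "adj \<equiv> mat_adjoint"

lemma adj_carrier[simp]: "A \<in> carrier_mat n m \<Longrightarrow> adj A \<in> carrier_mat m n"
  unfolding mat_adjoint_def by (auto simp: mat_of_rows_def)

lemma adj_dims[simp]: "dim_row (adj A) = dim_col A" "dim_col (adj A) = dim_row A"
  unfolding mat_adjoint_def by (auto simp: mat_of_rows_def)

lemma adj_index[simp]: "i < dim_col A \<Longrightarrow> j < dim_row A \<Longrightarrow> adj A $$ (i,j) = cnj (A $$ (j,i))"
  unfolding mat_adjoint_def by (auto simp: mat_of_rows_def)

lemma mult_entry: "A \<in> carrier_mat n m \<Longrightarrow> B \<in> carrier_mat m p \<Longrightarrow> i < n \<Longrightarrow> j < p \<Longrightarrow>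
  (A * B) $$ (i,j) = (\<Sum>k<m. A $$ (i,k) * B $$ (k,j))"
  by (auto simp: scalar_prod_def intro!: sum.cong)

lemma adj_adj[simp]: "adj (adj A) = A"
  by (rule eq_matI) auto

lemma adj_mult: assumes "A \<in> carrier_mat n m" "B \<in> carrier_mat m p"
  shows "adj (A * B) = adj B * adj A"
proof (rule eq_matI)
  fix i j assume "i < dim_row (adj B * adj A)" "j < dim_col (adj B * adj A)"
  with assms have ij: "i < p" "j < n" by auto
  have "adj (A * B) $$ (i,j) = cnj (\<Sum>k<m. A $$ (j,k) * B $$ (k,i))"
    using assms ij by (simp add: mult_entry[of A n m B p] carrier_matD del: index_mult_mat(1))
  also have "\<dots> = (\<Sum>k<m. adj B $$ (i,k) * adj A $$ (k,j))"
    using assms ij by (simp add: mult.commute cnj_sum)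
  also have "\<dots> = (adj B * adj A) $$ (i,j)"
    using assms ij by (subst mult_entry[of _ p m _ n]) auto
  finally show "adj (A * B) $$ (i,j) = (adj B * adj A) $$ (i,j)" .
qed (use assms in auto)

lemma adj_one[simp]: "adj (1\<^sub>m n) = 1\<^sub>m n"
  by (rule eq_matI) auto

lemma adj_add: "A \<in> carrier_mat n m \<Longrightarrow> B \<in> carrier_mat n m \<Longrightarrow> adj (A + B) = adj A + adj B"
  by (rule eq_matI) auto

lemma adj_smult: "adj (c \<cdot>\<^sub>m A) = cnj c \<cdot>\<^sub>m adj A"
  by (rule eq_matI) auto

definition dmat :: "nat \<Rightarrow> (nat \<Rightarrow> complex) \<Rightarrow> complex mat" where
  "dmat n f = mat n n (\<lambda>(i,j). if i = j then f i else 0)"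

lemma dmat_carrier[simp]: "dmat n f \<in> carrier_mat n n" and dmat_dims[simp]: "dim_row (dmat n f) = n" "dim_col (dmat n f) = n"
  by (auto simp: dmat_def)

lemma dmat_index[simp]: "i < n \<Longrightarrow> j < n \<Longrightarrow> dmat n f $$ (i,j) = (if i = j then f i else 0)"
  by (auto simp: dmat_def)

lemma sum_delta_l: "(\<Sum>k<(n::nat). (if i = k then c else 0) * g k) = (if i < n then c * g i else (0::complex))"
proof -
  have "(\<Sum>k<n. (if i = k then c else 0) * g k) = (\<Sum>k<n. if i = k then c * g k else 0)" by (rule sum.cong) auto
  then show ?thesis by (simp add: sum.delta')
qed

lemma sum_delta_r: "(\<Sum>k<(n::nat). g k * (if k = j then c k else 0)) = (if j < n then g j * c j else (0::complex))"
proof -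
  have "(\<Sum>k<n. g k * (if k = j then c k else 0)) = (\<Sum>k<n. if k = j then g k * c k else 0)" by (rule sum.cong) auto
  then show ?thesis by (simp add: sum.delta)
qed

lemma dmat_mult_left: "A \<in> carrier_mat n m \<Longrightarrow> i < n \<Longrightarrow> j < m \<Longrightarrow> (dmat n f * A) $$ (i,j) = f i * A $$ (i,j)"
  by (subst mult_entry[of _ n n _ m]) (auto simp: sum_delta_l)

lemma dmat_mult_right: "A \<in> carrier_mat m n \<Longrightarrow> i < m \<Longrightarrow> j < n \<Longrightarrow> (A * dmat n f) $$ (i,j) = A $$ (i,j) * f j"
  by (subst mult_entry[of _ m n _ n]) (auto simp: sum_delta_r)

lemma dmat_mult: "dmat n f * dmat n g = dmat n (\<lambda>i. f i * g i)"
  by (rule eq_matI) (auto simp del: index_mult_mat(1) simp: dmat_mult_left[of "dmat n g" n n])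

lemma adj_dmat: "adj (dmat n f) = dmat n (\<lambda>i. cnj (f i))"
  by (rule eq_matI) auto

lemma adj_dmat_real: "adj (dmat n (\<lambda>i. complex_of_real (d i))) = dmat n (\<lambda>i. complex_of_real (d i))"
  by (simp add: adj_dmat)

lemma unitary_right: "unitary_mat n V \<Longrightarrow> V * adj V = 1\<^sub>m n"
  unfolding unitary_mat_def using mat_mult_left_right_inverse[of "adj V" n V] by auto

lemma unitary_mult: assumes "unitary_mat n V" "unitary_mat n W" shows "unitary_mat n (V * W)"
proof -
  have c: "V \<in> carrier_mat n n" "W \<in> carrier_mat n n" using assms unfolding unitary_mat_def by auto
  have "adj (V * W) * (V * W) = adj W * adj V * (V * W)"
    using c by (simp add: adj_mult[OF c])
  also have "\<dots> = adj W * (adj V * (V * W))"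
    using c by (meson adj_carrier assoc_mult_mat mult_carrier_mat)
  also have "\<dots> = adj W * (adj V * V * W)"
    using c by (metis adj_carrier assoc_mult_mat)
  also have "\<dots> = 1\<^sub>m n" using assms c unfolding unitary_mat_def by simp
  finally show ?thesis using c unfolding unitary_mat_def by auto
qed

lemma unitary_adj: "unitary_mat n V \<Longrightarrow> unitary_mat n (adj V)"
  using unitary_right[of n V] unfolding unitary_mat_def by auto



definition decomp :: "nat \<Rightarrow> complex mat \<Rightarrow> bool" where
  "decomp N P \<longleftrightarrow> (\<exists>V d. unitary_mat N V \<and> (\<forall>i<N. 0 \<le> d i) \<and>
      P = V * dmat N (\<lambda>i. complex_of_real (d i)) * adj V)"

lemma mult_carrier_N[simp]: "A \<in> carrier_mat n n \<Longrightarrow> B \<in> carrier_mat n n \<Longrightarrow> A * B \<in> carrier_mat n n"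
  by auto

lemma unitary_carrier: "unitary_mat n V \<Longrightarrow> V \<in> carrier_mat n n"
  unfolding unitary_mat_def by auto

lemma unitary_cancel_l: assumes V: "unitary_mat n V" and X: "X \<in> carrier_mat n k"
  shows "adj V * (V * X) = X"
proof -
  have Vc: "V \<in> carrier_mat n n" using V unitary_carrier by blast
  have "adj V * (V * X) = (adj V * V) * X" using assoc_mult_mat[OF adj_carrier[OF Vc] Vc X] by simp
  also have "\<dots> = X" using V X unfolding unitary_mat_def by simp
  finally show ?thesis .
qed

lemma unitary_cancel_r: assumes V: "unitary_mat n V" and X: "X \<in> carrier_mat n k"
  shows "V * (adj V * X) = X"
proof -
  have Vc: "V \<in> carrier_mat n n" using V unitary_carrier by blast
  have "V * (adj V * X) = (V * adj V) * X" using assoc_mult_mat[OF Vc adj_carrier[OF Vc] X] by simp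
  also have "\<dots> = X" using unitary_right[OF V] X by simp
  finally show ?thesis .
qed

lemma unitary_cancel_r2: assumes V: "unitary_mat n V" and X: "X \<in> carrier_mat k n"
  shows "X * V * adj V = X"
proof -
  have Vc: "V \<in> carrier_mat n n" using V unitary_carrier by blast
  have "X * V * adj V = X * (V * adj V)" using assoc_mult_mat[OF X Vc adj_carrier[OF Vc]] by simp
  also have "\<dots> = X" using unitary_right[OF V] X by simp
  finally show ?thesis .
qed

lemma mat_vec_sprod_adj:
  assumes M: "M \<in> carrier_mat n m" and x: "x \<in> carrier_vec m" and y: "y \<in> carrier_vec n"
  shows "(M *\<^sub>v x) \<bullet> conjugate y = x \<bullet> conjugate (adj M *\<^sub>v y)"
proof -
  have "(M *\<^sub>v x) \<bullet> conjugate y = (\<Sum>i<n. (\<Sum>k<m. M $$ (i,k) * x $ k) * cnj (y $ i))"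
    using M x y by (auto simp: scalar_prod_def intro!: sum.cong)
  also have "\<dots> = (\<Sum>k<m. \<Sum>i<n. M $$ (i,k) * x $ k * cnj (y $ i))"
    by (simp add: sum_distrib_right sum.swap[of _ "{..<n}"])
  also have "\<dots> = (\<Sum>k<m. x $ k * cnj (\<Sum>i<n. cnj (M $$ (i,k)) * y $ i))"
    by (simp add: sum_distrib_left cnj_sum mult_ac)
  also have "\<dots> = x \<bullet> conjugate (adj M *\<^sub>v y)"
    using M x y by (auto simp: scalar_prod_def intro!: sum.cong)
  finally show ?thesis .
qed

lemma dmat_quad:
  assumes w: "w \<in> carrier_vec n" and d: "\<forall>i<n. 0 \<le> d i"
  shows "0 \<le> Re ((dmat n (\<lambda>i. complex_of_real (d i)) *\<^sub>v w) \<bullet> conjugate w)"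
proof -
  have "(dmat n (\<lambda>i. complex_of_real (d i)) *\<^sub>v w) \<bullet> conjugate w
      = (\<Sum>i<n. (\<Sum>k<n. (if i = k then complex_of_real (d i) else 0) * w $ k) * cnj (w $ i))"
    using w by (auto simp: scalar_prod_def intro!: sum.cong)
  also have "\<dots> = (\<Sum>i<n. complex_of_real (d i) * (w $ i * cnj (w $ i)))"
    by (rule sum.cong) (auto simp: sum_delta_l)
  finally have e: "(dmat n (\<lambda>i. complex_of_real (d i)) *\<^sub>v w) \<bullet> conjugate w = \<dots>" .
  have r: "Re (complex_of_real (d i) * (w $ i * cnj (w $ i))) = d i * (cmod (w $ i))^2" for i
  proof -
    have "w $ i * cnj (w $ i) = complex_of_real ((cmod (w $ i))^2)" using complex_norm_square[of "w $ i"] by simp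
    then show ?thesis by simp
  qed
  have "Re ((dmat n (\<lambda>i. complex_of_real (d i)) *\<^sub>v w) \<bullet> conjugate w) = (\<Sum>i<n. d i * (cmod (w $ i))^2)"
    unfolding e Re_sum using r by (intro sum.cong) auto
  also have "\<dots> \<ge> 0" using d by (intro sum_nonneg) auto
  finally show ?thesis .
qed

lemma adj_sandwich: assumes Vc: "V \<in> carrier_mat N N" and Dc: "D \<in> carrier_mat N N"
  shows "adj (V * D * adj V) = V * adj D * adj V"
proof -
  have "adj (V * D * adj V) = adj (adj V) * adj (V * D)"
    by (rule adj_mult[OF mult_carrier_mat[OF Vc Dc] adj_carrier[OF Vc]])
  also have "\<dots> = V * (adj D * adj V)" by (simp add: adj_mult[OF Vc Dc])
  also have "\<dots> = V * adj D * adj V"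
    by (rule assoc_mult_mat[OF Vc adj_carrier[OF Dc] adj_carrier[OF Vc], symmetric])
  finally show ?thesis .
qed

lemma decomp_psd: assumes "decomp N P" shows "psd_mat N P"
proof -
  obtain V d where V: "unitary_mat N V" and d: "\<forall>i<N. 0 \<le> d i"
    and P: "P = V * dmat N (\<lambda>i. complex_of_real (d i)) * adj V"
    using assms unfolding decomp_def by (elim exE conjE) (rule that, assumption+)
  let ?D = "dmat N (\<lambda>i. complex_of_real (d i))"
  have Vc: "V \<in> carrier_mat N N" using V unitary_carrier by auto
  have Pc: "P \<in> carrier_mat N N" using Vc P by auto
  have "adj P = V * adj ?D * adj V" unfolding P by (rule adj_sandwich[OF Vc dmat_carrier])
  also have "\<dots> = P" unfolding P adj_dmat_real ..
  finally have h: "adj P = P" .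
  have q: "0 \<le> Re ((P *\<^sub>v v) \<bullet> conjugate v)" if v: "v \<in> carrier_vec N" for v
  proof -
    let ?w = "adj V *\<^sub>v v"
    have w: "?w \<in> carrier_vec N" using mult_mat_vec_carrier[OF adj_carrier[OF Vc] v] .
    have Pv: "P *\<^sub>v v = V *\<^sub>v (?D *\<^sub>v ?w)" unfolding P using Vc v
      by (simp add: assoc_mult_mat_vec[of _ N N _ N] assoc_mult_mat[of _ N N _ N _ N])
    have dw: "?D *\<^sub>v ?w \<in> carrier_vec N" using mult_mat_vec_carrier[OF dmat_carrier w] .
    have eq: "(V *\<^sub>v (?D *\<^sub>v ?w)) \<bullet> conjugate v = (?D *\<^sub>v ?w) \<bullet> conjugate (adj V *\<^sub>v v)"
      by (rule mat_vec_sprod_adj[OF Vc dw v])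
    have "(P *\<^sub>v v) \<bullet> conjugate v = (?D *\<^sub>v ?w) \<bullet> conjugate ?w"
      unfolding Pv by (rule eq)
    then show ?thesis using dmat_quad[OF w d] by simp
  qed
  show ?thesis unfolding psd_mat_def using Pc h q by auto
qed

lemma decomp_sq:
  assumes V: "unitary_mat N V" and D: "D \<in> carrier_mat N N" and E: "E \<in> carrier_mat N N"
  shows "(V * D * adj V) * (V * E * adj V) = V * (D * E) * adj V"
proof -
  have Vc: "V \<in> carrier_mat N N" using V unitary_carrier by auto
  have "(V * D * adj V) * (V * E * adj V) = V * (D * (adj V * (V * (E * adj V))))"
    using Vc D E by (simp add: assoc_mult_mat[of _ N N _ N _ N])
  also have "\<dots> = V * (D * (E * adj V))" using unitary_cancel_l[OF V, of "E * adj V" N] Vc E by simp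
  also have "\<dots> = V * (D * E) * adj V" using Vc D E by (simp add: assoc_mult_mat[of _ N N _ N _ N])
  finally show ?thesis .
qed

lemma decomp_unique:
  assumes "decomp N P" "decomp N Q" "P * P = Q * Q"
  shows "P = Q"
proof -
  obtain V d where V: "unitary_mat N V" and d: "\<forall>i<N. 0 \<le> d i"
    and P: "P = V * dmat N (\<lambda>i. complex_of_real (d i)) * adj V"
    using assms unfolding decomp_def by (elim exE conjE) (rule that, assumption+)
  obtain W e where W: "unitary_mat N W" and e: "\<forall>i<N. 0 \<le> e i"
    and Q: "Q = W * dmat N (\<lambda>i. complex_of_real (e i)) * adj W"
    using assms unfolding decomp_def by (elim exE conjE) (rule that, assumption+)
  let ?D = "dmat N (\<lambda>i. complex_of_real (d i))"
  let ?E = "dmat N (\<lambda>i. complex_of_real (e i))"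
  let ?D2 = "dmat N (\<lambda>i. complex_of_real (d i) * complex_of_real (d i))"
  let ?E2 = "dmat N (\<lambda>i. complex_of_real (e i) * complex_of_real (e i))"
  have Vc: "V \<in> carrier_mat N N" using V unitary_carrier by auto
  have Wc: "W \<in> carrier_mat N N" using W unitary_carrier by auto
  define C where "C = adj V * W"
  have Cc: "C \<in> carrier_mat N N" unfolding C_def using Vc Wc by auto
  have PP: "P * P = V * ?D2 * adj V" unfolding P decomp_sq[OF V dmat_carrier dmat_carrier] dmat_mult ..
  have QQ: "Q * Q = W * ?E2 * adj W" unfolding Q decomp_sq[OF W dmat_carrier dmat_carrier] dmat_mult ..
  have "adj V * (P * P) * W = ?D2 * C"
    unfolding PP C_def using Vc Wc unitary_cancel_l[OF V, of "?D2 * (adj V * W)" N]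
    by (simp add: assoc_mult_mat[of _ N N _ N _ N])
  moreover have "adj V * (Q * Q) * W = C * ?E2"
    unfolding QQ C_def using Vc Wc W unfolding unitary_mat_def
    by (simp add: assoc_mult_mat[of _ N N _ N _ N])
  ultimately have DC: "?D2 * C = C * ?E2" using assms(3) by simp
  have DC1: "?D * C = C * ?E"
  proof (rule eq_matI)
    fix i j assume "i < dim_row (C * ?E)" "j < dim_col (C * ?E)"
    then have ij: "i < N" "j < N" using Cc by auto
    have "(?D2 * C) $$ (i,j) = (C * ?E2) $$ (i,j)" using DC by simp
    then have "complex_of_real (d i * d i) * C $$ (i,j) = C $$ (i,j) * complex_of_real (e j * e j)"
      using ij Cc by (simp add: dmat_mult_left[OF Cc] dmat_mult_right[OF Cc] del: index_mult_mat(1))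
    then have "C $$ (i,j) = 0 \<or> d i * d i = e j * e j"
      by (metis mult.commute mult_cancel_left of_real_eq_iff)
    then have "C $$ (i,j) = 0 \<or> d i = e j"
      using d e ij by (metis power2_eq_iff_nonneg power2_eq_square)
    then have "complex_of_real (d i) * C $$ (i,j) = C $$ (i,j) * complex_of_real (e j)" by auto
    then show "(?D * C) $$ (i,j) = (C * ?E) $$ (i,j)"
      using ij Cc by (simp add: dmat_mult_left[OF Cc] dmat_mult_right[OF Cc] del: index_mult_mat(1))
  qed (use Cc in auto)
  have PW: "P * W = W * ?E"
  proof -
    have "P * W = V * (?D * C)" unfolding P C_def using Vc Wc by (simp add: assoc_mult_mat[of _ N N _ N _ N])
    also have "\<dots> = V * (C * ?E)" using DC1 by simp
    also have "\<dots> = W * ?E" unfolding C_def using Vc Wc unitary_cancel_r[OF V, of "W * ?E" N]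
      by (simp add: assoc_mult_mat[of _ N N _ N _ N])
    finally show ?thesis .
  qed
  have Pc: "P \<in> carrier_mat N N" using P Vc by auto
  have "P = P * W * adj W" using unitary_cancel_r2[OF W Pc] by simp
  also have "\<dots> = Q" unfolding PW Q ..
  finally show ?thesis .
qed



lemma sprodc_sum: "x \<in> carrier_vec n \<Longrightarrow> y \<in> carrier_vec n \<Longrightarrow> x \<bullet>c y = (\<Sum>k<n. x $ k * cnj (y $ k))"
  by (auto simp: scalar_prod_def intro!: sum.cong)

lemma sprodc_self_real: "x \<in> carrier_vec n \<Longrightarrow> x \<bullet>c x = complex_of_real (Re (x \<bullet>c x))"
  using conjugate_square_ge_0_vec[of x] by (auto simp: less_eq_complex_def complex_eq_iff)

lemma unitary_complete:
  assumes u: "u \<in> carrier_vec N" and u1: "u \<bullet>c u = 1" and N: "0 < N"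
  shows "\<exists>W. unitary_mat N W \<and> col W 0 = u"
proof -
  interpret cof_vec_space N "TYPE(complex)" .
  have u0: "u \<noteq> 0\<^sub>v N" using u1 u by auto
  define b where "b = basis_completion u"
  from basis_completion[OF u u0, folded b_def]
  have dist_b: "distinct b" and indep: "\<not> lin_dep (set b)" and bc: "set b \<subseteq> carrier_vec N" and hdb: "hd b = u"
    and len_b: "length b = N" by auto
  from hdb len_b N obtain vs where bv: "b = u # vs" by (cases b, auto)
  define ws where "ws = gram_schmidt N b"
  from gram_schmidt_result[OF bc dist_b indep refl, folded ws_def]
  have ws: "set ws \<subseteq> carrier_vec N" "corthogonal ws" "length ws = N"
    by (auto simp: len_b)
  from gram_schmidt_hd[OF u, of vs, folded bv] have hdws: "hd ws = u" unfolding ws_def .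
  define nrm where "nrm w = complex_of_real (1 / sqrt (Re (w \<bullet>c w))) \<cdot>\<^sub>v w" for w :: "complex vec"
  define ws' where "ws' = map nrm ws"
  define W where "W = mat_of_cols N ws'"
  have ws'c: "set ws' \<subseteq> carrier_vec N" using ws unfolding ws'_def nrm_def by auto
  have len': "length ws' = N" using ws unfolding ws'_def by auto
  have Wc: "W \<in> carrier_mat N N" unfolding W_def using ws'c len' by auto
  have wsi: "ws ! i \<in> carrier_vec N" if "i < N" for i using ws that by auto
  have pos: "0 < Re (ws ! i \<bullet>c ws ! i)" if i: "i < N" for i
  proof -
    have "ws ! i \<bullet>c ws ! i \<noteq> 0" using corthogonalD[OF ws(2), of i i] i ws by auto
    moreover have "0 \<le> ws ! i \<bullet>c ws ! i" by auto
    ultimately show ?thesis by (auto simp: less_eq_complex_def complex_eq_iff)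
  qed
  have orth: "ws' ! j \<bullet>c ws' ! i = (if i = j then 1 else 0)" if ij: "i < N" "j < N" for i j
  proof -
    let ?c = "\<lambda>i. 1 / sqrt (Re (ws ! i \<bullet>c ws ! i))"
    have e: "ws' ! j \<bullet>c ws' ! i = complex_of_real (?c j * ?c i) * (ws ! j \<bullet>c ws ! i)"
      using ij ws wsi[OF ij(1)] wsi[OF ij(2)]
      by (simp add: ws'_def nrm_def sprodc_sum[of _ N] sum_distrib_left sum_divide_distrib mult_ac)
    show ?thesis
    proof (cases "i = j")
      case True
      have "ws ! i \<bullet>c ws ! i = complex_of_real (Re (ws ! i \<bullet>c ws ! i))"
        using sprodc_self_real wsi[OF ij(1)] by blast
      define r where "r = Re (ws ! i \<bullet>c ws ! i)"
      have r0: "0 < r" using pos[OF ij(1)] unfolding r_def .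
      have sq: "sqrt r * sqrt r = r" using r0 by simp
      have "1 / sqrt r * (1 / sqrt r) * r = 1" using r0 sq by (simp add: field_simps)
      then have "complex_of_real (1 / sqrt r * (1 / sqrt r)) * complex_of_real r = 1"
        by (metis of_real_1 of_real_mult)
      then show ?thesis using e True \<open>ws ! i \<bullet>c ws ! i = complex_of_real (Re (ws ! i \<bullet>c ws ! i))\<close>
        unfolding r_def using r0 unfolding r_def by auto
    next
      case False
      then show ?thesis using e corthogonalD[OF ws(2), of j i] ij ws by auto
    qed
  qed
  have "mat_adjoint W * W = 1\<^sub>m N"
  proof (rule eq_matI)
    fix i j assume "i < dim_row (1\<^sub>m N)" "j < dim_col (1\<^sub>m N)"
    then have ij: "i < N" "j < N" by auto
    have "(mat_adjoint W * W) $$ (i,j) = (\<Sum>k<N. cnj (W $$ (k,i)) * W $$ (k,j))"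
      using Wc ij by (simp add: mult_entry[of _ N N _ N] del: index_mult_mat(1))
    also have "\<dots> = ws' ! j \<bullet>c ws' ! i"
      using ij ws'c len' nth_mem[of i ws'] nth_mem[of j ws']
      by (subst sprodc_sum[of "ws' ! j" N "ws' ! i"]) (auto simp: W_def mult.commute mat_of_cols_index)
    finally show "(mat_adjoint W * W) $$ (i,j) = 1\<^sub>m N $$ (i,j)" using orth ij by simp
  qed (use Wc in auto)
  then have "unitary_mat N W" using Wc unfolding unitary_mat_def by auto
  moreover have "col W 0 = u"
  proof -
    have "ws ! 0 = u" using hdws N ws by (metis hd_conv_nth length_0_conv less_irrefl)
    then have "ws' ! 0 = u" using N ws u1 by (simp add: ws'_def nrm_def)
    then show ?thesis unfolding W_def using N len' ws'c nth_mem[of 0 ws'] by (subst col_mat_of_cols) auto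
  qed
  ultimately show ?thesis by blast
qed



lemma four_block_N: "four_block_mat (1\<^sub>m 1) (0\<^sub>m 1 m) (0\<^sub>m m 1) (1\<^sub>m m) = 1\<^sub>m (Suc m)"
  using four_block_one_mat[of 1 m] by simp

lemma spectral:
  "A \<in> carrier_mat N N \<Longrightarrow> adj A = A \<Longrightarrow>
   \<exists>V d. unitary_mat N V \<and> A = V * dmat N (\<lambda>i. complex_of_real (d i)) * adj V"
proof (induction N arbitrary: A)
  case 0
  have "A = 1\<^sub>m 0 * dmat 0 (\<lambda>i. complex_of_real 0) * adj (1\<^sub>m 0)"
    using 0 by (intro eq_matI) auto
  moreover have "unitary_mat 0 (1\<^sub>m 0)" unfolding unitary_mat_def by auto
  ultimately show ?case by (intro exI[of _ "1\<^sub>m 0"] exI[of _ "\<lambda>_. 0"]) simp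
next
  case (Suc m A)
  let ?N = "Suc m"
  have A: "A \<in> carrier_mat ?N ?N" and hA: "adj A = A" using Suc by auto
  obtain e where "poly (char_poly A) e = 0"
    using alg_closed_imp_poly_has_root[of "char_poly A"] degree_monic_char_poly[OF A] by auto
  then have "eigenvalue A e" using eigenvalue_root_char_poly[OF A] by simp
  then obtain v where "eigenvector A v e" unfolding eigenvalue_def by blast
  then have v: "v \<in> carrier_vec ?N" and v0: "v \<noteq> 0\<^sub>v ?N" and Av: "A *\<^sub>v v = e \<cdot>\<^sub>v v"
    unfolding eigenvector_def using A by auto
  define r where "r = Re (v \<bullet>c v)"
  have vv: "v \<bullet>c v = complex_of_real r" unfolding r_def using sprodc_self_real[OF v] .
  have r0: "0 < r" using conjugate_square_greater_0_vec[OF v] v0 vv by (simp add: less_eq_complex_def less_complex_def)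
  define c where "c = 1 / sqrt r"
  define u where "u = complex_of_real c \<cdot>\<^sub>v v"
  have u: "u \<in> carrier_vec ?N" unfolding u_def using v by auto
  have "u \<bullet>c u = complex_of_real (c * c) * (v \<bullet>c v)"
    unfolding u_def using v by (simp add: sprodc_sum[of _ ?N] sum_distrib_left mult_ac del: sum.lessThan_Suc)
  also have "\<dots> = 1" unfolding vv c_def using r0 by (simp add: field_simps flip: of_real_mult)
  finally have u1: "u \<bullet>c u = 1" .
  have Au: "A *\<^sub>v u = e \<cdot>\<^sub>v u" unfolding u_def using A v Av
    by (simp add: mult_mat_vec[OF A v] smult_smult_assoc mult.commute)
  obtain W where W: "unitary_mat ?N W" and Wu: "col W 0 = u"
    using unitary_complete[OF u u1] by auto
  have Wc: "W \<in> carrier_mat ?N ?N" using W unitary_carrier by auto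
  define B where "B = adj W * A * W"
  have Bc: "B \<in> carrier_mat ?N ?N" unfolding B_def using A Wc by auto
  have hB: "adj B = B"
  proof -
    have "adj B = adj W * adj (adj W * A)" unfolding B_def by (rule adj_mult) (use A Wc in auto)
    also have "\<dots> = adj W * (A * W)" by (subst adj_mult[of _ ?N ?N _ ?N]) (use A Wc hA in auto)
    also have "\<dots> = B" unfolding B_def using A Wc by (simp add: assoc_mult_mat[of _ ?N ?N _ ?N _ ?N])
    finally show ?thesis .
  qed
  have col0: "B $$ (i,0) = (if i = 0 then e else 0)" if i: "i < ?N" for i
  proof -
    have "B $$ (i,0) = row (adj W) i \<bullet> col (A * W) 0"
      unfolding B_def using A Wc i by (simp add: assoc_mult_mat[of _ ?N ?N _ ?N _ ?N])
    also have "col (A * W) 0 = e \<cdot>\<^sub>v col W 0"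
    proof -
      have "col (A * W) 0 = A *\<^sub>v col W 0" using col_mult2[OF A Wc, of 0] by simp
      then show ?thesis using Au Wu by simp
    qed
    also have "row (adj W) i \<bullet> (e \<cdot>\<^sub>v col W 0) = e * (row (adj W) i \<bullet> col W 0)"
      using Wc i by (simp add: scalar_prod_smult_distrib[of _ ?N])
    also have "row (adj W) i \<bullet> col W 0 = (adj W * W) $$ (i,0)" using Wc i by simp
    also have "\<dots> = (if i = 0 then 1 else 0)" using W i unfolding unitary_mat_def by simp
    finally show ?thesis by simp
  qed
  have row0: "B $$ (0,j) = cnj (B $$ (j,0))" if j: "j < ?N" for j
  proof -
    have "B $$ (0,j) = adj B $$ (0,j)" using hB by simp
    also have "\<dots> = cnj (B $$ (j,0))" using Bc j by simp
    finally show ?thesis .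
  qed
  have er: "e = complex_of_real (Re e)"
    using row0[of 0] col0[of 0] by (simp add: complex_eq_iff)
  define B3 where "B3 = mat m m (\<lambda>(i,j). B $$ (Suc i, Suc j))"
  have B3c: "B3 \<in> carrier_mat m m" unfolding B3_def by auto
  have hB3: "adj B3 = B3"
  proof (rule eq_matI)
    fix i j assume "i < dim_row B3" "j < dim_col B3"
    then have ij: "i < m" "j < m" using B3c by auto
    have "adj B3 $$ (i,j) = cnj (B $$ (Suc j, Suc i))" using ij by (simp add: B3_def)
    also have "\<dots> = adj B $$ (Suc i, Suc j)" using ij Bc by simp
    also have "\<dots> = B3 $$ (i,j)" using ij hB by (simp add: B3_def)
    finally show "adj B3 $$ (i,j) = B3 $$ (i,j)" .
  qed (use B3c in auto)
  obtain V3 d3 where V3: "unitary_mat m V3" and B3e: "B3 = V3 * dmat m (\<lambda>i. complex_of_real (d3 i)) * adj V3"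
    using Suc.IH[OF B3c hB3] by blast
  have V3c: "V3 \<in> carrier_mat m m" using V3 unitary_carrier by auto
  let ?D3 = "dmat m (\<lambda>i. complex_of_real (d3 i))"
  let ?E = "mat 1 1 (\<lambda>_. e)"
  define d where "d i = (if i = 0 then Re e else d3 (i - 1))" for i
  define V' where "V' = four_block_mat (1\<^sub>m 1) (0\<^sub>m 1 m) (0\<^sub>m m 1) V3"
  have V'c: "V' \<in> carrier_mat ?N ?N" unfolding V'_def using V3c
    using four_block_carrier_mat[of "1\<^sub>m 1" 1 1 V3 m m] by simp
  have aV': "adj V' = four_block_mat (1\<^sub>m 1) (0\<^sub>m 1 m) (0\<^sub>m m 1) (adj V3)"
    unfolding V'_def using V3c by (intro eq_matI) auto
  have Bblock: "B = four_block_mat ?E (0\<^sub>m 1 m) (0\<^sub>m m 1) B3"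
  proof (rule eq_matI)
    fix i j assume "i < dim_row (four_block_mat ?E (0\<^sub>m 1 m) (0\<^sub>m m 1) B3)"
      "j < dim_col (four_block_mat ?E (0\<^sub>m 1 m) (0\<^sub>m m 1) B3)"
    then have ij: "i < ?N" "j < ?N" using B3c by auto
    show "B $$ (i,j) = four_block_mat ?E (0\<^sub>m 1 m) (0\<^sub>m m 1) B3 $$ (i,j)"
    proof (cases "i = 0")
      case True
      then show ?thesis using ij row0[of j] col0[of j] col0[of 0] B3c by (cases j) auto
    next
      case False
      then show ?thesis using ij col0[of i] B3c by (cases i; cases j) (auto simp: B3_def)
    qed
  qed (use Bc B3c in auto)
  have Dblock: "dmat ?N (\<lambda>i. complex_of_real (d i)) = four_block_mat ?E (0\<^sub>m 1 m) (0\<^sub>m m 1) ?D3"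
    by (rule eq_matI) (auto simp: d_def er[symmetric])
  have "V' * dmat ?N (\<lambda>i. complex_of_real (d i)) = four_block_mat ?E (0\<^sub>m 1 m) (0\<^sub>m m 1) (V3 * ?D3)"
    unfolding V'_def Dblock
    by (subst mult_four_block_mat[of _ 1 1 _ m _ m _ _ 1 _ m]) (use V3c in auto)
  then have "V' * dmat ?N (\<lambda>i. complex_of_real (d i)) * adj V' =
     four_block_mat ?E (0\<^sub>m 1 m) (0\<^sub>m m 1) (V3 * ?D3) * four_block_mat (1\<^sub>m 1) (0\<^sub>m 1 m) (0\<^sub>m m 1) (adj V3)"
    unfolding aV' by simp
  also have "\<dots> = four_block_mat ?E (0\<^sub>m 1 m) (0\<^sub>m m 1) (V3 * ?D3 * adj V3)"
    by (subst mult_four_block_mat[of _ 1 1 _ m _ m _ _ 1 _ m]) (use V3c in auto)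
  finally have "V' * dmat ?N (\<lambda>i. complex_of_real (d i)) * adj V' =
     four_block_mat ?E (0\<^sub>m 1 m) (0\<^sub>m m 1) (V3 * ?D3 * adj V3)" .
  then have BV: "B = V' * dmat ?N (\<lambda>i. complex_of_real (d i)) * adj V'"
    unfolding Bblock B3e by simp
  have uV': "unitary_mat ?N V'"
  proof -
    have "adj V' * V' = four_block_mat (1\<^sub>m 1) (0\<^sub>m 1 m) (0\<^sub>m m 1) (adj V3 * V3)"
      unfolding aV' unfolding V'_def
      by (subst mult_four_block_mat[of _ 1 1 _ m _ m _ _ 1 _ m]) (use V3c in auto)
    also have "\<dots> = 1\<^sub>m ?N" using V3 unfolding unitary_mat_def four_block_N by simp
    finally show ?thesis using V'c unfolding unitary_mat_def by auto
  qed
  have "A = W * B * adj W"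
    unfolding B_def using unitary_cancel_r[OF W, of "A * W * adj W" ?N] A Wc
      unitary_cancel_r2[OF W A]
    by (simp add: assoc_mult_mat[of _ ?N ?N _ ?N _ ?N])
  also have "\<dots> = (W * V') * dmat ?N (\<lambda>i. complex_of_real (d i)) * adj (W * V')"
    unfolding BV using Wc V'c by (simp add: adj_mult[OF Wc V'c] assoc_mult_mat[of _ ?N ?N _ ?N _ ?N])
  finally show ?case using unitary_mult[OF W uV'] by blast
qed



lemma dmat_quad_eq:
  assumes w: "w \<in> carrier_vec n"
  shows "Re ((dmat n (\<lambda>i. complex_of_real (d i)) *\<^sub>v w) \<bullet> conjugate w) = (\<Sum>i<n. d i * (cmod (w $ i))^2)"
proof -
  have "(dmat n (\<lambda>i. complex_of_real (d i)) *\<^sub>v w) \<bullet> conjugate w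
      = (\<Sum>i<n. (\<Sum>k<n. (if i = k then complex_of_real (d i) else 0) * w $ k) * cnj (w $ i))"
    using w by (auto simp: scalar_prod_def intro!: sum.cong)
  also have "\<dots> = (\<Sum>i<n. complex_of_real (d i) * (w $ i * cnj (w $ i)))"
    by (rule sum.cong) (auto simp: sum_delta_l)
  finally have e: "(dmat n (\<lambda>i. complex_of_real (d i)) *\<^sub>v w) \<bullet> conjugate w = \<dots>" .
  have r: "Re (complex_of_real (d i) * (w $ i * cnj (w $ i))) = d i * (cmod (w $ i))^2" for i
  proof -
    have "w $ i * cnj (w $ i) = complex_of_real ((cmod (w $ i))^2)" using complex_norm_square[of "w $ i"] by simp
    then show ?thesis by simp
  qed
  show ?thesis unfolding e Re_sum using r by (intro sum.cong) auto
qed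

lemma psd_decomp: assumes "psd_mat N A" shows "decomp N A"
proof -
  have A: "A \<in> carrier_mat N N" and hA: "adj A = A"
    and q: "\<And>v. v \<in> carrier_vec N \<Longrightarrow> 0 \<le> Re ((A *\<^sub>v v) \<bullet> conjugate v)"
    using assms unfolding psd_mat_def by auto
  obtain V d where V: "unitary_mat N V" and Ae: "A = V * dmat N (\<lambda>i. complex_of_real (d i)) * adj V"
    using spectral[OF A hA] by blast
  let ?D = "dmat N (\<lambda>i. complex_of_real (d i))"
  have Vc: "V \<in> carrier_mat N N" using V unitary_carrier by auto
  have dn: "0 \<le> d i" if i: "i < N" for i
  proof -
    let ?v = "col V i"
    let ?e = "unit_vec N i :: complex vec"
    have v: "?v \<in> carrier_vec N" using Vc i by auto
    have ec: "?e \<in> carrier_vec N" by simp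
    have av: "adj V *\<^sub>v ?v = ?e"
    proof -
      have "adj V *\<^sub>v ?v = col (adj V * V) i" using col_mult2[OF adj_carrier[OF Vc] Vc i] by simp
      also have "\<dots> = ?e" using V i unfolding unitary_mat_def by simp
      finally show ?thesis .
    qed
    have dw: "?D *\<^sub>v ?e \<in> carrier_vec N" using mult_mat_vec_carrier[OF dmat_carrier ec] .
    have Av: "A *\<^sub>v ?v = V *\<^sub>v (?D *\<^sub>v ?e)"
      unfolding Ae using Vc v av[symmetric]
      by (simp add: assoc_mult_mat_vec[of _ N N _ N] assoc_mult_mat[of _ N N _ N _ N])
    have "(A *\<^sub>v ?v) \<bullet> conjugate ?v = (?D *\<^sub>v ?e) \<bullet> conjugate (adj V *\<^sub>v ?v)"
      unfolding Av by (rule mat_vec_sprod_adj[OF Vc dw v])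
    then have "Re ((A *\<^sub>v ?v) \<bullet> conjugate ?v) = (\<Sum>k<N. d k * (cmod (?e $ k))^2)"
      unfolding av using dmat_quad_eq[OF ec] by simp
    also have "\<dots> = (\<Sum>k<N. if k = i then d k else 0)"
      by (rule sum.cong) (auto simp: unit_vec_def)
    also have "\<dots> = d i" using i by simp
    finally show ?thesis using q[OF v] by simp
  qed
  show ?thesis unfolding decomp_def using V Ae dn by (intro exI[of _ V] exI[of _ d]) auto
qed

lemma dmat_cong: "(\<And>i. i < n \<Longrightarrow> f i = g i) \<Longrightarrow> dmat n f = dmat n g"
  by (rule eq_matI) auto

lemma decomp_sqrt: assumes "decomp N A" shows "\<exists>P. decomp N P \<and> P * P = A"
proof -
  obtain V d where V: "unitary_mat N V" and d: "\<forall>i<N. 0 \<le> d i"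
    and Ae: "A = V * dmat N (\<lambda>i. complex_of_real (d i)) * adj V"
    using assms unfolding decomp_def by (elim exE conjE) (rule that, assumption+)
  define P where "P = V * dmat N (\<lambda>i. complex_of_real (sqrt (d i))) * adj V"
  have "decomp N P" unfolding decomp_def P_def using V d by (intro exI[of _ V] exI[of _ "\<lambda>i. sqrt (d i)"]) auto
  moreover have "P * P = A"
  proof -
    have "P * P = V * (dmat N (\<lambda>i. complex_of_real (sqrt (d i))) * dmat N (\<lambda>i. complex_of_real (sqrt (d i)))) * adj V"
      unfolding P_def by (rule decomp_sq[OF V dmat_carrier dmat_carrier])
    also have "dmat N (\<lambda>i. complex_of_real (sqrt (d i))) * dmat N (\<lambda>i. complex_of_real (sqrt (d i)))
       = dmat N (\<lambda>i. complex_of_real (d i))"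
      unfolding dmat_mult using d by (intro dmat_cong) (simp flip: of_real_mult)
    finally show ?thesis unfolding Ae .
  qed
  ultimately show ?thesis by blast
qed

lemma psd_adjX_X: assumes X: "X \<in> carrier_mat N N" shows "psd_mat N (adj X * X)"
proof -
  have c: "adj X * X \<in> carrier_mat N N" using X by auto
  have h: "adj (adj X * X) = adj X * X" using adj_mult[OF adj_carrier[OF X] X] by simp
  have "0 \<le> Re (((adj X * X) *\<^sub>v v) \<bullet> conjugate v)" if v: "v \<in> carrier_vec N" for v
  proof -
    have xv: "X *\<^sub>v v \<in> carrier_vec N" using X v by auto
    have "((adj X * X) *\<^sub>v v) \<bullet> conjugate v = (adj X *\<^sub>v (X *\<^sub>v v)) \<bullet> conjugate v"
      using X v by (simp add: assoc_mult_mat_vec[of _ N N _ N])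
    also have "\<dots> = (X *\<^sub>v v) \<bullet> conjugate (adj (adj X) *\<^sub>v v)"
      by (rule mat_vec_sprod_adj[OF adj_carrier[OF X] xv v])
    finally have "((adj X * X) *\<^sub>v v) \<bullet> conjugate v = (X *\<^sub>v v) \<bullet>c (X *\<^sub>v v)" by simp
    moreover have "0 \<le> (X *\<^sub>v v) \<bullet>c (X *\<^sub>v v)" by auto
    ultimately show ?thesis by (simp add: less_eq_complex_def)
  qed
  then show ?thesis unfolding psd_mat_def using c h by auto
qed

lemma mat_abs_char:
  assumes X: "X \<in> carrier_mat N N"
  shows "decomp N (mat_abs N X)" "mat_abs N X * mat_abs N X = adj X * X"
proof -
  obtain P where P: "decomp N P" "P * P = adj X * X"
    using decomp_sqrt[OF psd_decomp[OF psd_adjX_X[OF X]]] by blast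
  have "mat_abs N X = P" unfolding mat_abs_def
  proof (rule the_equality)
    show "psd_mat N P \<and> P * P = adj X * X" using P decomp_psd by auto
    fix Q assume "psd_mat N Q \<and> Q * Q = adj X * X"
    then show "Q = P" using decomp_unique[OF psd_decomp P(1)] P(2) by auto
  qed
  then show "decomp N (mat_abs N X)" "mat_abs N X * mat_abs N X = adj X * X" using P by auto
qed

lemma mat_abs_unique:
  assumes X: "X \<in> carrier_mat N N" and P: "psd_mat N P" "P * P = adj X * X"
  shows "mat_abs N X = P"
  using decomp_unique[OF mat_abs_char(1)[OF X] psd_decomp[OF P(1)]] mat_abs_char(2)[OF X] P(2) by simp



definition sw :: "nat \<Rightarrow> nat \<Rightarrow> nat" where "sw n i = (if i < n then i + n else i - n)"
definition sg :: "nat \<Rightarrow> nat \<Rightarrow> complex" where "sg n i = (if i < n then 1 else -1)"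

lemma sw_lt: "N = 2 * n \<Longrightarrow> i < N \<Longrightarrow> sw n i < N" by (auto simp: sw_def)
lemma sw_sw: "N = 2 * n \<Longrightarrow> i < N \<Longrightarrow> sw n (sw n i) = i" by (auto simp: sw_def)
lemma sw_inj: "N = 2 * n \<Longrightarrow> i < N \<Longrightarrow> j < N \<Longrightarrow> sw n j = sw n i \<longleftrightarrow> i = j"
  by (metis sw_sw)
lemma sg_sq: "sg n i * sg n i = 1" by (auto simp: sg_def)
lemma sg_cnj: "cnj (sg n i) = sg n i" by (auto simp: sg_def)

lemma sum_sw: "N = 2 * n \<Longrightarrow> (\<Sum>k<N. f (sw n k)) = (\<Sum>k<N. (f k :: complex))"
  by (rule sum.reindex_bij_witness[of _ "sw n" "sw n"]) (auto simp: sw_lt sw_sw)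

lemma sharp_index:
  assumes N: "N = 2 * n" and X: "X \<in> carrier_mat N N" and i: "i < N" and j: "j < N"
  shows "sharp n X $$ (i,j) = sg n i * sg n j * X $$ (sw n j, sw n i)"
  using X i j N unfolding sharp_def split_block_def Let_def
  by (auto simp: sw_def sg_def)

lemma sharp_carrier:
  assumes N: "N = 2 * n" and X: "X \<in> carrier_mat N N" shows "sharp n X \<in> carrier_mat N N"
  using X N unfolding sharp_def split_block_def Let_def by auto

lemma sharp_mult:
  assumes N: "N = 2 * n" and A: "A \<in> carrier_mat N N" and B: "B \<in> carrier_mat N N"
  shows "sharp n (A * B) = sharp n B * sharp n A"
proof (rule eq_matI)
  note sA = sharp_carrier[OF N A] and sB = sharp_carrier[OF N B]
  fix i j assume "i < dim_row (sharp n B * sharp n A)" "j < dim_col (sharp n B * sharp n A)"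
  then have ij: "i < N" "j < N" using sA sB by auto
  have AB: "A * B \<in> carrier_mat N N" using A B by auto
  have "sharp n (A * B) $$ (i,j) = sg n i * sg n j * (A * B) $$ (sw n j, sw n i)"
    by (rule sharp_index[OF N AB ij])
  also have "(A * B) $$ (sw n j, sw n i) = (\<Sum>k<N. A $$ (sw n j, k) * B $$ (k, sw n i))"
    by (rule mult_entry[OF A B sw_lt[OF N ij(2)] sw_lt[OF N ij(1)]])
  also have "\<dots> = (\<Sum>k<N. A $$ (sw n j, sw n k) * B $$ (sw n k, sw n i))"
    by (rule sum_sw[OF N, symmetric])
  also have "sg n i * sg n j * \<dots> = (\<Sum>k<N. (sg n i * sg n k * B $$ (sw n k, sw n i)) * (sg n k * sg n j * A $$ (sw n j, sw n k)))"
  proof -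
    have hk: "(sg n i * sg n k * B $$ (sw n k, sw n i)) * (sg n k * sg n j * A $$ (sw n j, sw n k))
      = sg n i * sg n j * (A $$ (sw n j, sw n k) * B $$ (sw n k, sw n i))" for k
    proof -
      have "(sg n i * sg n k * B $$ (sw n k, sw n i)) * (sg n k * sg n j * A $$ (sw n j, sw n k))
        = (sg n k * sg n k) * (sg n i * sg n j * (A $$ (sw n j, sw n k) * B $$ (sw n k, sw n i)))"
        by (simp only: mult_ac)
      then show ?thesis using sg_sq[of n k] by simp
    qed
    have "sg n i * sg n j * (\<Sum>k<N. A $$ (sw n j, sw n k) * B $$ (sw n k, sw n i))
        = (\<Sum>k<N. sg n i * sg n j * (A $$ (sw n j, sw n k) * B $$ (sw n k, sw n i)))"
      by (simp add: sum_distrib_left)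
    also have "\<dots> = (\<Sum>k<N. (sg n i * sg n k * B $$ (sw n k, sw n i)) * (sg n k * sg n j * A $$ (sw n j, sw n k)))"
      by (rule sum.cong[OF refl]) (rule hk[symmetric])
    finally show ?thesis .
  qed
  also have "\<dots> = (\<Sum>k<N. sharp n B $$ (i,k) * sharp n A $$ (k,j))"
    using ij by (intro sum.cong) (auto simp: sharp_index[OF N A] sharp_index[OF N B])
  also have "\<dots> = (sharp n B * sharp n A) $$ (i,j)"
    by (rule mult_entry[OF sB sA ij, symmetric])
  finally show "sharp n (A * B) $$ (i,j) = (sharp n B * sharp n A) $$ (i,j)" .
qed (use A B sharp_carrier[OF N A] sharp_carrier[OF N B] sharp_carrier[OF N mult_carrier_mat[OF A B]] in auto)

lemma sharp_adj:
  assumes N: "N = 2 * n" and A: "A \<in> carrier_mat N N"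
  shows "sharp n (adj A) = adj (sharp n A)"
proof (rule eq_matI)
  note sA = sharp_carrier[OF N A] and sa = sharp_carrier[OF N adj_carrier[OF A]]
  fix i j assume "i < dim_row (adj (sharp n A))" "j < dim_col (adj (sharp n A))"
  then have ij: "i < N" "j < N" using sA by auto
  have "sharp n (adj A) $$ (i,j) = sg n i * sg n j * adj A $$ (sw n j, sw n i)"
    by (rule sharp_index[OF N adj_carrier[OF A] ij])
  also have "\<dots> = sg n i * sg n j * cnj (A $$ (sw n i, sw n j))"
    using A sw_lt[OF N ij(1)] sw_lt[OF N ij(2)] by simp
  also have "\<dots> = cnj (sharp n A $$ (j,i))"
    using sharp_index[OF N A ij(2) ij(1)] by (simp add: sg_cnj)
  also have "\<dots> = adj (sharp n A) $$ (i,j)" using sA ij by simp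
  finally show "sharp n (adj A) $$ (i,j) = adj (sharp n A) $$ (i,j)" .
qed (use sharp_carrier[OF N A] sharp_carrier[OF N adj_carrier[OF A]] in auto)

lemma sharp_one: assumes N: "N = 2 * n" shows "sharp n (1\<^sub>m N) = 1\<^sub>m N"
proof -
  have c: "1\<^sub>m N \<in> carrier_mat N N" by simp
  show ?thesis using sharp_carrier[OF N c]
    by (intro eq_matI) (auto simp: sharp_index[OF N c] sw_lt[OF N] sg_sq sw_inj[OF N])
qed

lemma sharp_add:
  assumes N: "N = 2 * n" and A: "A \<in> carrier_mat N N" and B: "B \<in> carrier_mat N N"
  shows "sharp n (A + B) = sharp n A + sharp n B"
proof -
  have c: "A + B \<in> carrier_mat N N" using A B by simp
  show ?thesis
  proof (rule eq_matI)
    fix i j assume "i < dim_row (sharp n A + sharp n B)" "j < dim_col (sharp n A + sharp n B)"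
    then have ij: "i < N" "j < N" using sharp_carrier[OF N B] by auto
    show "sharp n (A + B) $$ (i,j) = (sharp n A + sharp n B) $$ (i,j)"
      using ij A B sharp_carrier[OF N A] sharp_carrier[OF N B] sw_lt[OF N ij(1)] sw_lt[OF N ij(2)]
      by (simp add: sharp_index[OF N c ij] sharp_index[OF N A ij] sharp_index[OF N B ij] algebra_simps)
  qed (use sharp_carrier[OF N A] sharp_carrier[OF N B] sharp_carrier[OF N c] in auto)
qed

lemma sharp_smult:
  assumes N: "N = 2 * n" and A: "A \<in> carrier_mat N N"
  shows "sharp n (c \<cdot>\<^sub>m A) = c \<cdot>\<^sub>m sharp n A"
proof -
  have cc: "c \<cdot>\<^sub>m A \<in> carrier_mat N N" using A by simp
  show ?thesis
  proof (rule eq_matI)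
    fix i j assume "i < dim_row (c \<cdot>\<^sub>m sharp n A)" "j < dim_col (c \<cdot>\<^sub>m sharp n A)"
    then have ij: "i < N" "j < N" using sharp_carrier[OF N A] by auto
    show "sharp n (c \<cdot>\<^sub>m A) $$ (i,j) = (c \<cdot>\<^sub>m sharp n A) $$ (i,j)"
      using ij A sharp_carrier[OF N A] sw_lt[OF N ij(1)] sw_lt[OF N ij(2)]
      by (simp add: sharp_index[OF N cc ij] sharp_index[OF N A ij] algebra_simps)
  qed (use sharp_carrier[OF N A] sharp_carrier[OF N cc] in auto)
qed

lemma sharp_dmat: assumes N: "N = 2 * n" shows "sharp n (dmat N f) = dmat N (\<lambda>i. f (sw n i))"
proof -
  have c: "dmat N f \<in> carrier_mat N N" by simp
  show ?thesis using sharp_carrier[OF N c]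
    by (intro eq_matI) (auto simp: sharp_index[OF N c] sw_lt[OF N] sg_sq sw_inj[OF N])
qed

lemma sharp_decomp: assumes N: "N = 2 * n" and "decomp N P" shows "decomp N (sharp n P)"
proof -
  obtain V d where V: "unitary_mat N V" and d: "\<forall>i<N. 0 \<le> d i"
    and Pe: "P = V * dmat N (\<lambda>i. complex_of_real (d i)) * adj V"
    using assms(2) unfolding decomp_def by (elim exE conjE) (rule that, assumption+)
  have Vc: "V \<in> carrier_mat N N" using V unitary_carrier by auto
  let ?D = "dmat N (\<lambda>i. complex_of_real (d i))"
  define W where "W = adj (sharp n V)"
  have sV: "sharp n V \<in> carrier_mat N N" using sharp_carrier[OF N Vc] .
  have Wc: "W \<in> carrier_mat N N" unfolding W_def using sV by auto
  have sP: "sharp n P = W * dmat N (\<lambda>i. complex_of_real (d (sw n i))) * adj W"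
  proof -
    have "sharp n P = sharp n (adj V) * sharp n (V * ?D)"
      unfolding Pe by (rule sharp_mult[OF N]) (use Vc in auto)
    also have "\<dots> = sharp n (adj V) * (sharp n ?D * sharp n V)"
      by (subst sharp_mult[OF N]) (use Vc in auto)
    also have "\<dots> = W * dmat N (\<lambda>i. complex_of_real (d (sw n i))) * adj W"
      unfolding W_def sharp_adj[OF N Vc] sharp_dmat[OF N] using sV
      by (simp add: assoc_mult_mat[of _ N N _ N _ N])
    finally show ?thesis .
  qed
  have "adj W * W = sharp n (adj V * V)"
    unfolding W_def using sharp_mult[OF N adj_carrier[OF Vc] Vc] sharp_adj[OF N Vc] by simp
  also have "\<dots> = 1\<^sub>m N" using V sharp_one[OF N] unfolding unitary_mat_def by simp
  finally have "unitary_mat N W" using Wc unfolding unitary_mat_def by simp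
  then show ?thesis unfolding decomp_def sP using d sw_lt[OF N]
    by (intro exI[of _ W] exI[of _ "\<lambda>i. d (sw n i)"]) auto
qed



lemma inv_cancel: "(A :: complex mat) * B = 1\<^sub>m N \<Longrightarrow> A \<in> carrier_mat N N \<Longrightarrow> B \<in> carrier_mat N N \<Longrightarrow> Z \<in> carrier_mat N N
  \<Longrightarrow> A * (B * Z) = Z"
proof -
  assume AB: "A * B = 1\<^sub>m N" and c: "A \<in> carrier_mat N N" "B \<in> carrier_mat N N" "Z \<in> carrier_mat N N"
  have "A * (B * Z) = (A * B) * Z" using assoc_mult_mat[OF c] by simp
  also have "\<dots> = Z" unfolding AB using c(3) by simp
  finally show ?thesis .
qed

lemma dmat_one: "dmat N (\<lambda>_. 1) = 1\<^sub>m N"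
  by (rule eq_matI) auto

lemma mat_vec_zero: "M \<in> carrier_mat n m \<Longrightarrow> M *\<^sub>v 0\<^sub>v m = 0\<^sub>v n"
  by (rule eq_vecI) (auto simp: scalar_prod_def)

lemma dmat_unit: "i < N \<Longrightarrow> dmat N f *\<^sub>v unit_vec N i = f i \<cdot>\<^sub>v unit_vec N i"
  by (rule eq_vecI) (auto simp: scalar_prod_right_unit)

lemma invertible_case:
  assumes N: "N = 2 * n" and Y: "Y \<in> carrier_mat N N" and sY: "sharp n Y = Y"
    and inj: "\<And>v. v \<in> carrier_vec N \<Longrightarrow> Y *\<^sub>v v = 0\<^sub>v N \<Longrightarrow> v = 0\<^sub>v N"
  shows "\<exists>U. unitary_mat N U \<and> sharp n U = U \<and> Y = U * mat_abs N Y"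
proof -
  define P where "P = mat_abs N Y"
  have dP: "decomp N P" and PP: "P * P = adj Y * Y" using mat_abs_char[OF Y] unfolding P_def by auto
  obtain V d where V: "unitary_mat N V" and d: "\<forall>i<N. 0 \<le> d i"
    and Pe: "P = V * dmat N (\<lambda>i. complex_of_real (d i)) * adj V"
    using dP unfolding decomp_def by (elim exE conjE) (rule that, assumption+)
  have Vc: "V \<in> carrier_mat N N" using V unitary_carrier by auto
  have Pc: "P \<in> carrier_mat N N" using Pe Vc by auto
  let ?D = "dmat N (\<lambda>i. complex_of_real (d i))"
  have dpos: "d i \<noteq> 0" if i: "i < N" for i
  proof
    assume d0: "d i = 0"
    let ?v = "col V i"
    let ?e = "unit_vec N i :: complex vec"
    have v: "?v \<in> carrier_vec N" using Vc i by auto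
    have av: "adj V *\<^sub>v ?v = ?e"
    proof -
      have "adj V *\<^sub>v ?v = col (adj V * V) i" using col_mult2[OF adj_carrier[OF Vc] Vc i] by simp
      also have "\<dots> = ?e" using V i unfolding unitary_mat_def by simp
      finally show ?thesis .
    qed
    have Pv: "P *\<^sub>v ?v = 0\<^sub>v N"
    proof -
      have "P *\<^sub>v ?v = V *\<^sub>v (?D *\<^sub>v (adj V *\<^sub>v ?v))"
        unfolding Pe using Vc v by (simp add: assoc_mult_mat_vec[of _ N N _ N] assoc_mult_mat[of _ N N _ N _ N])
      also have "\<dots> = 0\<^sub>v N" unfolding av dmat_unit[OF i] using d0 Vc
        by (intro eq_vecI) (auto simp: scalar_prod_def)
      finally show ?thesis .
    qed
    have "(adj Y * Y) *\<^sub>v ?v = 0\<^sub>v N"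
      unfolding PP[symmetric] using Pc v Pv mat_vec_zero[OF Pc] by (simp add: assoc_mult_mat_vec[of _ N N _ N])
    then have "((adj Y * Y) *\<^sub>v ?v) \<bullet> conjugate ?v = 0" using v by simp
    moreover have "((adj Y * Y) *\<^sub>v ?v) \<bullet> conjugate ?v = (Y *\<^sub>v ?v) \<bullet>c (Y *\<^sub>v ?v)"
    proof -
      have yv: "Y *\<^sub>v ?v \<in> carrier_vec N" using Y v by auto
      have "((adj Y * Y) *\<^sub>v ?v) \<bullet> conjugate ?v = (adj Y *\<^sub>v (Y *\<^sub>v ?v)) \<bullet> conjugate ?v"
        using Y v by (simp add: assoc_mult_mat_vec[of _ N N _ N])
      also have "\<dots> = (Y *\<^sub>v ?v) \<bullet> conjugate (adj (adj Y) *\<^sub>v ?v)"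
        by (rule mat_vec_sprod_adj[OF adj_carrier[OF Y] yv v])
      finally show ?thesis by simp
    qed
    ultimately have "Y *\<^sub>v ?v = 0\<^sub>v N" using Y v by (metis conjugate_square_eq_0_vec mult_mat_vec_carrier)
    then have "?v = 0\<^sub>v N" using inj[OF v] by simp
    moreover have "?v \<bullet>c ?v = 1"
    proof -
      have "(adj V * V) $$ (i,i) = 1" using V i unfolding unitary_mat_def by simp
      then have "(\<Sum>k<N. cnj (V $$ (k,i)) * V $$ (k,i)) = 1"
        using Vc i by (simp add: mult_entry[of _ N N _ N] del: index_mult_mat(1))
      then show ?thesis using Vc i v by (simp add: sprodc_sum[of _ N] mult.commute)
    qed
    ultimately show False by simp
  qed
  define Pinv where "Pinv = V * dmat N (\<lambda>i. complex_of_real (1 / d i)) * adj V"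
  have Pic: "Pinv \<in> carrier_mat N N" unfolding Pinv_def using Vc by auto
  have one: "dmat N (\<lambda>i. complex_of_real (d i)) * dmat N (\<lambda>i. complex_of_real (1 / d i)) = 1\<^sub>m N"
    "dmat N (\<lambda>i. complex_of_real (1 / d i)) * dmat N (\<lambda>i. complex_of_real (d i)) = 1\<^sub>m N"
    unfolding dmat_mult dmat_one[symmetric] using dpos by (auto intro!: dmat_cong)
  have VV: "V * adj V = 1\<^sub>m N" using unitary_right[OF V] .
  have PPi: "P * Pinv = 1\<^sub>m N" unfolding Pe Pinv_def decomp_sq[OF V dmat_carrier dmat_carrier] one
    using Vc VV by simp
  have PiP: "Pinv * P = 1\<^sub>m N" unfolding Pe Pinv_def decomp_sq[OF V dmat_carrier dmat_carrier] one
    using Vc VV by simp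
  have hP: "adj P = P" unfolding Pe adj_sandwich[OF Vc dmat_carrier] adj_dmat_real ..
  have hPi: "adj Pinv = Pinv" unfolding Pinv_def adj_sandwich[OF Vc dmat_carrier] adj_dmat_real ..
  define U where "U = Y * Pinv"
  have Uc: "U \<in> carrier_mat N N" unfolding U_def using Y Pic by auto
  have aU: "adj U = Pinv * adj Y" unfolding U_def adj_mult[OF Y Pic] hPi ..
  have aYc: "adj Y \<in> carrier_mat N N" using Y by auto
  note cs = Y Pic Pc aYc Vc
  note ac = assoc_mult_mat[of _ N N _ N _ N]
  have uU: "adj U * U = 1\<^sub>m N"
  proof -
    have "adj U * U = Pinv * ((adj Y * Y) * Pinv)" unfolding aU unfolding U_def using cs by (simp add: ac)
    also have "\<dots> = Pinv * (P * (P * Pinv))" unfolding PP[symmetric] using cs by (simp add: ac)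
    also have "\<dots> = 1\<^sub>m N" unfolding PPi using cs PiP by simp
    finally show ?thesis .
  qed
  then have U: "unitary_mat N U" using Uc unfolding unitary_mat_def by simp
  have YUP: "Y = U * P" unfolding U_def using cs PiP by (simp add: ac)
  define Q where "Q = U * P * adj U"
  have dQ: "decomp N Q"
  proof -
    have "Q = (U * V) * ?D * adj (U * V)" unfolding Q_def Pe adj_mult[OF Uc Vc] using Uc Vc by (simp add: ac)
    then show ?thesis unfolding decomp_def using unitary_mult[OF U V] d by blast
  qed
  have QQ: "Q * Q = Y * adj Y"
  proof -
    have "Q * Q = U * (P * ((adj U * U) * (P * adj U)))" unfolding Q_def using cs Uc by (simp add: ac)
    also have "\<dots> = (U * P) * adj (U * P)" unfolding uU adj_mult[OF Uc Pc] hP using cs Uc by (simp add: ac)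
    finally show ?thesis using YUP by simp
  qed
  have sPc: "sharp n P \<in> carrier_mat N N" using sharp_carrier[OF N Pc] .
  have sPP: "sharp n P * sharp n P = Y * adj Y"
    using sharp_mult[OF N Pc Pc, symmetric] PP sharp_mult[OF N aYc Y] sY sharp_adj[OF N Y] by simp
  have sPQ: "sharp n P = Q" using decomp_unique[OF sharp_decomp[OF N dP] dQ] sPP QQ by simp
  have YQU: "Y = sharp n P * U" unfolding sPQ Q_def using cs Uc uU YUP by (simp add: ac)
  have "sharp n U = sharp n Pinv * Y" unfolding U_def using sharp_mult[OF N Y Pic] sY by simp
  also have "\<dots> = (sharp n Pinv * sharp n P) * U" unfolding YQU
    using sharp_carrier[OF N Pic] sPc Uc by (simp add: ac)
  also have "sharp n Pinv * sharp n P = 1\<^sub>m N" using sharp_mult[OF N Pc Pic] PPi sharp_one[OF N] by simp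
  finally have "sharp n U = U" using Uc by simp
  then show ?thesis using U YUP unfolding P_def by blast
qed



lemma complex_bw:
  fixes g :: "nat \<Rightarrow> complex"
  assumes B: "\<And>k. cmod (g k) \<le> B"
  shows "\<exists>s. strict_mono s \<and> convergent (\<lambda>k. g (s k))"
proof -
  obtain s1 where s1: "strict_mono s1" and m1: "monoseq (\<lambda>k. Re (g (s1 k)))"
    using seq_monosub[of "\<lambda>k. Re (g k)"] by blast
  have "Bseq (\<lambda>k. Re (g (s1 k)))"
    by (rule BseqI'[of _ B]) (metis B abs_Re_le_cmod order_trans real_norm_def)
  then have c1: "convergent (\<lambda>k. Re (g (s1 k)))" using Bseq_monoseq_convergent m1 by blast
  obtain s2 where s2: "strict_mono s2" and m2: "monoseq (\<lambda>k. Im (g (s1 (s2 k))))"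
    using seq_monosub[of "\<lambda>k. Im (g (s1 k))"] by blast
  have "Bseq (\<lambda>k. Im (g (s1 (s2 k))))"
    by (rule BseqI'[of _ B]) (metis B abs_Im_le_cmod order_trans real_norm_def)
  then have c2: "convergent (\<lambda>k. Im (g (s1 (s2 k))))" using Bseq_monoseq_convergent m2 by blast
  have c1': "convergent (\<lambda>k. Re (g (s1 (s2 k))))"
    using convergent_subseq_convergent[OF c1 s2] by (simp add: o_def)
  obtain a b where a: "(\<lambda>k. Re (g (s1 (s2 k)))) \<longlonglongrightarrow> a" and b: "(\<lambda>k. Im (g (s1 (s2 k)))) \<longlonglongrightarrow> b"
    using c1' c2 unfolding convergent_def by blast
  have "(\<lambda>k. Complex (Re (g (s1 (s2 k)))) (Im (g (s1 (s2 k))))) \<longlonglongrightarrow> Complex a b"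
    by (rule tendsto_Complex[OF a b])
  then have "convergent (\<lambda>k. g (s1 (s2 k)))" unfolding convergent_def by auto
  moreover have "strict_mono (s1 \<circ> s2)" using s1 s2 by (rule strict_mono_o)
  ultimately show ?thesis by (intro exI[of _ "s1 \<circ> s2"]) auto
qed

lemma mat_bw:
  fixes f :: "nat \<Rightarrow> complex mat"
  assumes B: "\<And>k i j. i < N \<Longrightarrow> j < N \<Longrightarrow> cmod (f k $$ (i,j)) \<le> 1"
  shows "\<exists>r. strict_mono r \<and> (\<forall>i<N. \<forall>j<N. convergent (\<lambda>k. f (r k) $$ (i,j)))"
proof -
  have gen: "finite S \<Longrightarrow> S \<subseteq> {..<N} \<times> {..<N} \<Longrightarrow> \<exists>r. strict_mono r \<and> (\<forall>p\<in>S. convergent (\<lambda>k. f (r k) $$ p))" for S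
  proof (induction S rule: finite_induct)
    case empty
    have "strict_mono (\<lambda>k::nat. k)" by (simp add: strict_mono_def)
    then show ?case by blast
  next
    case (insert p S)
    then obtain r where r: "strict_mono r" and c: "\<forall>q\<in>S. convergent (\<lambda>k. f (r k) $$ q)" by auto
    obtain i j where p: "p = (i,j)" "i < N" "j < N" using insert by auto
    obtain s where s: "strict_mono s" and cs: "convergent (\<lambda>k. f (r (s k)) $$ p)"
      using complex_bw[of "\<lambda>k. f (r k) $$ p" 1] B p by auto
    have "\<forall>q\<in>insert p S. convergent (\<lambda>k. f (r (s k)) $$ q)"
      using cs c convergent_subseq_convergent[OF _ s] by (auto simp: o_def)
    moreover have "strict_mono (r \<circ> s)" using r s by (rule strict_mono_o)
    ultimately show ?case by (intro exI[of _ "r \<circ> s"]) (auto simp: o_def)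
  qed
  obtain r where "strict_mono r" "\<forall>p\<in>{..<N} \<times> {..<N}. convergent (\<lambda>k. f (r k) $$ p)"
    using gen[of "{..<N} \<times> {..<N}"] by auto
  then show ?thesis by auto
qed

definition mlim :: "nat \<Rightarrow> (nat \<Rightarrow> complex mat) \<Rightarrow> complex mat \<Rightarrow> bool" where
  "mlim N A L \<longleftrightarrow> (\<forall>i<N. \<forall>j<N. (\<lambda>k. A k $$ (i,j)) \<longlonglongrightarrow> L $$ (i,j))"

lemma mlim_mult:
  assumes "mlim N A L" "mlim N B M" "\<And>k. A k \<in> carrier_mat N N" "\<And>k. B k \<in> carrier_mat N N"
    "L \<in> carrier_mat N N" "M \<in> carrier_mat N N"
  shows "mlim N (\<lambda>k. A k * B k) (L * M)"
  unfolding mlim_def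
proof (intro allI impI)
  fix i j assume ij: "i < N" "j < N"
  have "(\<lambda>k. \<Sum>l<N. A k $$ (i,l) * B k $$ (l,j)) \<longlonglongrightarrow> (\<Sum>l<N. L $$ (i,l) * M $$ (l,j))"
    using assms(1,2) ij unfolding mlim_def by (intro tendsto_intros) auto
  then show "(\<lambda>k. (A k * B k) $$ (i,j)) \<longlonglongrightarrow> (L * M) $$ (i,j)"
    using mult_entry[OF assms(3) assms(4) ij] mult_entry[OF assms(5,6) ij] by simp
qed

lemma mlim_adj:
  assumes "mlim N A L" "\<And>k. A k \<in> carrier_mat N N" "L \<in> carrier_mat N N"
  shows "mlim N (\<lambda>k. adj (A k)) (adj L)"
  unfolding mlim_def
proof (intro allI impI)
  fix i j assume ij: "i < N" "j < N"
  have "(\<lambda>k. cnj (A k $$ (j,i))) \<longlonglongrightarrow> cnj (L $$ (j,i))"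
    using assms(1) ij unfolding mlim_def by (intro tendsto_intros) auto
  moreover have "adj (A k) $$ (i,j) = cnj (A k $$ (j,i))" for k using assms(2)[of k] ij by simp
  ultimately show "(\<lambda>k. adj (A k) $$ (i,j)) \<longlonglongrightarrow> adj L $$ (i,j)"
    using assms(3) ij by simp
qed

lemma mlim_unique:
  assumes "mlim N A L" "mlim N A M" "L \<in> carrier_mat N N" "M \<in> carrier_mat N N"
  shows "L = M"
proof (rule eq_matI)
  fix i j assume "i < dim_row M" "j < dim_col M"
  then have ij: "i < N" "j < N" using assms by auto
  show "L $$ (i,j) = M $$ (i,j)"
    using assms(1,2) ij unfolding mlim_def by (meson LIMSEQ_unique)
qed (use assms in auto)

lemma mlim_const: "mlim N (\<lambda>k. L) L"
  unfolding mlim_def by auto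

lemma mlim_cong: "mlim N A L \<Longrightarrow> (\<And>k. A k = B k) \<Longrightarrow> mlim N B L"
  unfolding mlim_def by auto

lemma mlim_sharp:
  assumes N: "N = 2 * n" and "mlim N A L" "\<And>k. A k \<in> carrier_mat N N" "L \<in> carrier_mat N N"
  shows "mlim N (\<lambda>k. sharp n (A k)) (sharp n L)"
  unfolding mlim_def
proof (intro allI impI)
  fix i j assume ij: "i < N" "j < N"
  have "(\<lambda>k. sg n i * sg n j * A k $$ (sw n j, sw n i)) \<longlonglongrightarrow> sg n i * sg n j * L $$ (sw n j, sw n i)"
    using assms(2) sw_lt[OF N ij(1)] sw_lt[OF N ij(2)] unfolding mlim_def by (intro tendsto_intros) auto
  then show "(\<lambda>k. sharp n (A k) $$ (i,j)) \<longlonglongrightarrow> sharp n L $$ (i,j)"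
    using sharp_index[OF N assms(3) ij] sharp_index[OF N assms(4) ij] by simp
qed

lemma quad_sum:
  assumes M: "M \<in> carrier_mat N N" and v: "v \<in> carrier_vec N"
  shows "(M *\<^sub>v v) \<bullet> conjugate v = (\<Sum>i<N. (\<Sum>j<N. M $$ (i,j) * v $ j) * cnj (v $ i))"
  using M v by (auto simp: scalar_prod_def intro!: sum.cong)



lemma shift_mv:
  fixes X :: "complex mat"
  assumes X: "X \<in> carrier_mat N N" and v: "v \<in> carrier_vec N"
  shows "(X + c \<cdot>\<^sub>m 1\<^sub>m N) *\<^sub>v v = X *\<^sub>v v + c \<cdot>\<^sub>v v"
proof (rule eq_vecI)
  fix i assume "i < dim_vec (X *\<^sub>v v + c \<cdot>\<^sub>v v)"
  then have i: "i < N" using X v by auto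
  have "((X + c \<cdot>\<^sub>m 1\<^sub>m N) *\<^sub>v v) $ i = (\<Sum>k<N. (X $$ (i,k) + c * (if i = k then 1 else 0)) * v $ k)"
    using X v i by (auto simp: scalar_prod_def intro!: sum.cong)
  also have "\<dots> = (\<Sum>k<N. X $$ (i,k) * v $ k + (if i = k then c else 0) * v $ k)"
    by (rule sum.cong) (auto simp: distrib_right)
  also have "\<dots> = (\<Sum>k<N. X $$ (i,k) * v $ k) + (\<Sum>k<N. (if i = k then c else 0) * v $ k)"
    by (rule sum.distrib)
  also have "\<dots> = (X *\<^sub>v v + c \<cdot>\<^sub>v v) $ i"
    using X v i by (simp add: sum_delta_l scalar_prod_def atLeast0LessThan)
  finally show "((X + c \<cdot>\<^sub>m 1\<^sub>m N) *\<^sub>v v) $ i = (X *\<^sub>v v + c \<cdot>\<^sub>v v) $ i" .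
qed (use X v in auto)

lemma unitary_entry_bound:
  assumes U: "unitary_mat N U" and ij: "i < N" "j < N"
  shows "cmod (U $$ (i,j)) \<le> 1"
proof -
  have Uc: "U \<in> carrier_mat N N" using U unitary_carrier by auto
  have "(adj U * U) $$ (j,j) = 1" using U ij unfolding unitary_mat_def by simp
  then have "(\<Sum>l<N. cnj (U $$ (l,j)) * U $$ (l,j)) = 1"
    using Uc ij by (simp add: mult_entry[of _ N N _ N] del: index_mult_mat(1))
  moreover have "cnj (U $$ (l,j)) * U $$ (l,j) = complex_of_real ((cmod (U $$ (l,j)))^2)" for l
    using complex_norm_square[of "U $$ (l,j)"] by (simp add: mult.commute)
  ultimately have "(\<Sum>l<N. (cmod (U $$ (l,j)))^2) = 1"
    by (metis (no_types, lifting) of_real_eq_1_iff of_real_sum sum.cong)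
  moreover have "(cmod (U $$ (i,j)))^2 \<le> (\<Sum>l<N. (cmod (U $$ (l,j)))^2)"
    using ij by (intro member_le_sum) auto
  ultimately have "(cmod (U $$ (i,j)))^2 \<le> 1" by simp
  then show ?thesis by (simp add: power_le_one_iff)
qed

theorem main:
  fixes n :: nat and X :: "complex mat"
  assumes X: "X \<in> carrier_mat (2 * n) (2 * n)"
    and sX: "sharp n X = X"
  shows "\<exists>U. unitary_mat (2 * n) U \<and> sharp n U = U \<and> X = U * mat_abs (2 * n) X"
proof -
  define N where "N = 2 * n"
  have N: "N = 2 * n" by (simp add: N_def)
  have Xc: "X \<in> carrier_mat N N" using X N_def by simp
  have finE: "finite {e. eigenvalue X e}"
  proof -
    have "char_poly X \<noteq> 0" using degree_monic_char_poly[OF Xc] by auto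
    then have "finite {e. poly (char_poly X) e = 0}" by (rule poly_roots_finite)
    then show ?thesis using eigenvalue_root_char_poly[OF Xc] by simp
  qed
  have ex_t: "\<exists>t. 0 < t \<and> t \<le> 1 / (real k + 1) \<and> \<not> eigenvalue X (- complex_of_real t)" for k
  proof (rule ccontr)
    assume nt: "\<not> ?thesis"
    have all: "eigenvalue X (- complex_of_real (1 / (real m + 1)))" if "m \<ge> k" for m
    proof -
      have "0 < 1 / (real m + 1)" by simp
      moreover have "1 / (real m + 1) \<le> 1 / (real k + 1)" using that by (simp add: frac_le)
      ultimately show ?thesis using nt by blast
    qed
    let ?f = "\<lambda>m::nat. - complex_of_real (1 / (real m + 1))"
    have "?f ` {k..} \<subseteq> {e. eigenvalue X e}" using all by auto
    then have "finite (?f ` {k..})" using finE finite_subset by blast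
    moreover have "inj_on ?f {k..}" by (auto simp: inj_on_def)
    ultimately have "finite {k..}" using finite_imageD by blast
    then show False using infinite_Ici by blast
  qed
  obtain t where t: "\<And>k. 0 < t k" "\<And>k. t k \<le> 1 / (real k + 1)" "\<And>k. \<not> eigenvalue X (- complex_of_real (t k))"
  proof -
    have "\<forall>k. \<exists>t. 0 < t \<and> t \<le> 1 / (real k + 1) \<and> \<not> eigenvalue X (- complex_of_real t)"
      using ex_t by blast
    then obtain t where "\<forall>k. 0 < t k \<and> t k \<le> 1 / (real k + 1) \<and> \<not> eigenvalue X (- complex_of_real (t k))"
      by (rule choice[THEN exE])
    then show ?thesis using that by blast
  qed
  have t0: "t \<longlonglongrightarrow> 0"
  proof (rule real_tendsto_sandwich[of "\<lambda>_. 0" t _ "\<lambda>k. inverse (real (Suc k))"])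
    show "\<forall>\<^sub>F k in sequentially. 0 \<le> t k" using t(1) by (simp add: less_imp_le)
    show "\<forall>\<^sub>F k in sequentially. t k \<le> inverse (real (Suc k))"
      using t(2) by (simp add: inverse_eq_divide add.commute)
  qed (use LIMSEQ_inverse_real_of_nat in auto)
  define Y where "Y k = X + complex_of_real (t k) \<cdot>\<^sub>m 1\<^sub>m N" for k
  have Yc: "Y k \<in> carrier_mat N N" for k unfolding Y_def using Xc by auto
  have sY: "sharp n (Y k) = Y k" for k
    unfolding Y_def using sharp_add[OF N Xc, of "complex_of_real (t k) \<cdot>\<^sub>m 1\<^sub>m N"] sharp_smult[OF N, of "1\<^sub>m N"]
      sharp_one[OF N] sX by simp
  have injY: "v = 0\<^sub>v N" if v: "v \<in> carrier_vec N" and Yv: "Y k *\<^sub>v v = 0\<^sub>v N" for k v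
  proof (rule ccontr)
    assume v0: "v \<noteq> 0\<^sub>v N"
    have "X *\<^sub>v v + complex_of_real (t k) \<cdot>\<^sub>v v = 0\<^sub>v N" using Yv unfolding Y_def shift_mv[OF Xc v] .
    then have "X *\<^sub>v v = (- complex_of_real (t k)) \<cdot>\<^sub>v v"
    proof -
      assume h: "X *\<^sub>v v + complex_of_real (t k) \<cdot>\<^sub>v v = 0\<^sub>v N"
      show ?thesis
      proof (rule eq_vecI)
        fix i assume "i < dim_vec (- complex_of_real (t k) \<cdot>\<^sub>v v)"
        then have i: "i < N" using v by auto
        have "(X *\<^sub>v v + complex_of_real (t k) \<cdot>\<^sub>v v) $ i = 0" using h i by simp
        then show "(X *\<^sub>v v) $ i = (- complex_of_real (t k) \<cdot>\<^sub>v v) $ i" using i v Xc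
          by (simp add: eq_neg_iff_add_eq_0)
      qed (use Xc v in auto)
    qed
    then have "eigenvector X v (- complex_of_real (t k))" unfolding eigenvector_def using v v0 Xc by auto
    then show False using t(3)[of k] unfolding eigenvalue_def by blast
  qed
  have ex_U: "\<exists>U. unitary_mat N U \<and> sharp n U = U \<and> Y k = U * mat_abs N (Y k)" for k
    by (rule invertible_case[OF N Yc sY]) (rule injY)
  obtain U where U: "\<And>k. unitary_mat N (U k)" "\<And>k. sharp n (U k) = U k"
    "\<And>k. Y k = U k * mat_abs N (Y k)"
  proof -
    have "\<forall>k. \<exists>U. unitary_mat N U \<and> sharp n U = U \<and> Y k = U * mat_abs N (Y k)"
      using ex_U by blast
    then obtain U where "\<forall>k. unitary_mat N (U k) \<and> sharp n (U k) = U k \<and> Y k = U k * mat_abs N (Y k)"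
      by (rule choice[THEN exE])
    then show ?thesis using that by blast
  qed
  have Uc: "U k \<in> carrier_mat N N" for k using U(1) unitary_carrier by auto
  obtain r where r: "strict_mono r" and conv: "\<forall>i<N. \<forall>j<N. convergent (\<lambda>k. U (r k) $$ (i,j))"
    using mat_bw[of N U] unitary_entry_bound[OF U(1)] by blast
  define Ul where "Ul = mat N N (\<lambda>(i,j). lim (\<lambda>k. U (r k) $$ (i,j)))"
  have Ulc: "Ul \<in> carrier_mat N N" unfolding Ul_def by simp
  have mU: "mlim N (\<lambda>k. U (r k)) Ul"
    unfolding mlim_def Ul_def using conv by (simp add: convergent_LIMSEQ_iff)
  have mY: "mlim N (\<lambda>k. Y (r k)) X"
    unfolding mlim_def
  proof (intro allI impI)
    fix i j assume ij: "i < N" "j < N"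
    have tr: "(\<lambda>k. t (r k)) \<longlonglongrightarrow> 0" using LIMSEQ_subseq_LIMSEQ[OF t0 r] by (simp add: o_def)
    have "(\<lambda>k. X $$ (i,j) + complex_of_real (t (r k)) * (if i = j then 1 else 0)) \<longlonglongrightarrow> X $$ (i,j) + complex_of_real 0 * (if i = j then 1 else 0)"
      by (intro tendsto_intros tr)
    then show "(\<lambda>k. Y (r k) $$ (i,j)) \<longlonglongrightarrow> X $$ (i,j)"
      unfolding Y_def using ij Xc by simp
  qed
  have aU: "mlim N (\<lambda>k. adj (U (r k))) (adj Ul)" by (rule mlim_adj[OF mU Uc Ulc])
  have uUl: "adj Ul * Ul = 1\<^sub>m N"
  proof -
    have "mlim N (\<lambda>k. adj (U (r k)) * U (r k)) (adj Ul * Ul)"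
      by (rule mlim_mult[OF aU mU]) (use Uc Ulc in auto)
    moreover have "adj (U (r k)) * U (r k) = 1\<^sub>m N" for k using U(1) unfolding unitary_mat_def by auto
    ultimately have "mlim N (\<lambda>k. 1\<^sub>m N) (adj Ul * Ul)" by simp
    then show ?thesis using mlim_unique[OF mlim_const] Ulc by (metis adj_carrier mult_carrier_mat one_carrier_mat)
  qed
  then have Uu: "unitary_mat N Ul" using Ulc unfolding unitary_mat_def by simp
  have sUl: "sharp n Ul = Ul"
  proof -
    have "mlim N (\<lambda>k. sharp n (U (r k))) (sharp n Ul)" by (rule mlim_sharp[OF N mU Uc Ulc])
    then have "mlim N (\<lambda>k. U (r k)) (sharp n Ul)" using U(2) by simp
    then show ?thesis using mlim_unique[OF _ mU] sharp_carrier[OF N Ulc] Ulc by blast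
  qed
  define P where "P k = mat_abs N (Y k)" for k
  have Pc: "P k \<in> carrier_mat N N" for k
    using mat_abs_char(1)[OF Yc] decomp_psd unfolding P_def psd_mat_def by blast
  have hP: "adj (P k) = P k" for k
    using mat_abs_char(1)[OF Yc] decomp_psd unfolding P_def psd_mat_def by blast
  have PP: "P k * P k = adj (Y k) * Y k" for k using mat_abs_char(2)[OF Yc] unfolding P_def by blast
  have PUY: "P k = adj (U k) * Y k" for k
    using U(3)[of k] unitary_cancel_l[OF U(1) Pc] unfolding P_def by metis
  define R where "R = adj Ul * X"
  have Rc: "R \<in> carrier_mat N N" unfolding R_def using Ulc Xc by auto
  have mP: "mlim N (\<lambda>k. P (r k)) R"
    unfolding R_def using mlim_mult[OF aU mY] Uc Yc Ulc Xc PUY by simp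
  have hR: "adj R = R"
  proof -
    have "mlim N (\<lambda>k. adj (P (r k))) (adj R)" by (rule mlim_adj[OF mP Pc Rc])
    then have "mlim N (\<lambda>k. P (r k)) (adj R)" using hP by simp
    then show ?thesis using mlim_unique[OF _ mP] Rc by (metis adj_carrier)
  qed
  have RR: "R * R = adj X * X"
  proof -
    have "mlim N (\<lambda>k. P (r k) * P (r k)) (R * R)" by (rule mlim_mult[OF mP mP Pc Pc Rc Rc])
    then have a: "mlim N (\<lambda>k. adj (Y (r k)) * Y (r k)) (R * R)" using PP by simp
    have b: "mlim N (\<lambda>k. adj (Y (r k)) * Y (r k)) (adj X * X)"
      by (rule mlim_mult[OF mlim_adj[OF mY Yc Xc] mY]) (use Yc Xc in auto)
    show ?thesis using mlim_unique[OF a b] Rc Xc by auto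
  qed
  have qR: "0 \<le> Re ((R *\<^sub>v v) \<bullet> conjugate v)" if v: "v \<in> carrier_vec N" for v
  proof -
    have lim: "(\<lambda>k. Re (\<Sum>i<N. (\<Sum>j<N. P (r k) $$ (i,j) * v $ j) * cnj (v $ i)))
       \<longlonglongrightarrow> Re (\<Sum>i<N. (\<Sum>j<N. R $$ (i,j) * v $ j) * cnj (v $ i))"
      using mP unfolding mlim_def by (intro tendsto_intros) auto
    have "0 \<le> Re (\<Sum>i<N. (\<Sum>j<N. P (r k) $$ (i,j) * v $ j) * cnj (v $ i))" for k
    proof -
      have ps: "psd_mat N (P (r k))" using decomp_psd[OF mat_abs_char(1)[OF Yc]] unfolding P_def .
      then have "0 \<le> Re ((P (r k) *\<^sub>v v) \<bullet> conjugate v)" using v unfolding psd_mat_def by blast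
      then show ?thesis using quad_sum[OF Pc v] by simp
    qed
    then have "0 \<le> Re (\<Sum>i<N. (\<Sum>j<N. R $$ (i,j) * v $ j) * cnj (v $ i))"
      using LIMSEQ_le_const[OF lim] by blast
    then show ?thesis using quad_sum[OF Rc v] by simp
  qed
  have pR: "psd_mat N R" unfolding psd_mat_def using Rc hR qR by auto
  have absX: "mat_abs N X = R" by (rule mat_abs_unique[OF Xc pR RR])
  have "Ul * mat_abs N X = X" unfolding absX R_def by (rule unitary_cancel_r[OF Uu Xc])
  then show ?thesis using Uu sUl unfolding N_def by metis
qed


theorem mainTheorem12:
  fixes n :: nat and X :: "complex mat"
  assumes "X \<in> carrier_mat (2 * n) (2 * n)"
    and "sharp n X = X"
  shows "\<exists>U. unitary_mat (2 * n) U \<and> sharp n U = U \<and> X = U * mat_abs (2 * n) X"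
  by (rule main[OF assms])

end
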